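(* Let $k\ge3$, let $G=(V,E)$ be a $k$-uniform hypergraph with connected components $V_1,\dots,V_s$ ($s\ge1$), and let $\mathbf x\in\mathbb C^n$ be an eigenvector of the Laplacian tensor $\mathcal D-\mathcal A$ (respectively, of the signless Laplacian tensor $\mathcal D+\mathcal A$) corresponding to the eigenvalue $0$. Then for every $i\in[s]$ with $\mathbf x(V_i)\neq0$: (a) $\mathbf x(V_i)$ is an eigenvector of the sub-tensor $(\mathcal D-\mathcal A)(V_i)$ (respectively $(\mathcal D+\mathcal A)(V_i)$) corresponding to the eigenvalue $0$; (b) $\mathrm{sup}(\mathbf x(V_i))=V_i$; and (c) there exist $\gamma_i\in\mathbb C\setminus\{0\}$ and nonnegative integers $\alpha_j$ ($j\in V_i$) such that $x_j=\gamma_i\exp\!\big(\tfrac{2\alpha_j\pi}{k}\sqrt{-1}\big)$ for all $j\in V_i$.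
   Context: A $k$-uniform hypergraph $G=(V,E)$ has vertex set $V=[n]$ ($n\ge k$) and a nonempty edge set $E$ of $k$-element subsets of $V$; $E_i=\{e\in E:i\in e\}$, $d_i=|E_i|$. Two distinct vertices are connected if there is a sequence of edges $e_1,\dots,e_m$ with $i\in e_1$, $j\in e_m$, $e_r\cap e_{r+1}\ne\emptyset$. A connected component is a maximal set of pairwise connected vertices; an isolated vertex (degree $0$, a singleton) is also a connected component, so the components partition $V$. The adjacency tensor $\mathcal A$ has $a_{i_1\dots i_k}=\frac1{(k-1)!}$ if $\{i_1,\dots,i_k\}\in E$, else $0$; $\mathcal D$ is diagonal with $d_{i\dots i}=d_i$. Thus $((\mathcal D\pm\mathcal A)\mathbf x^{k-1})_i=d_ix_i^{k-1}\pm\sum_{e\in E_i}\prod_{j\in e\setminus\{i\}}x_j$. $\lambda$ is an eigenvalue of a tensor $\mathcal T$ with eigenvector $\mathbf x\in\mathbb C^n\setminus\{0\}$ if $(\mathcal T\mathbf x^{k-1})_i=\lambda x_i^{k-1}$ for all $i$. For $S=\{j_1,\dots,j_m\}\subseteq[n]$, the sub-tensor $\mathcal T(S)$ is the order-$k$ dimension-$m$ tensor with entries $t_{j_{i_1}\dots j_{i_k}}$, and $\mathbf x(S)$ is the subvector $(x_j)_{j\in S}$. $\mathrm{sup}(\mathbf x)=\{i: x_i\ne0\}$. *)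

theory Defs
  imports Complex_Main
begin

definition uniform_hypergraph :: "nat \<Rightarrow> nat \<Rightarrow> nat set set \<Rightarrow> bool" where
  "uniform_hypergraph k n E \<longleftrightarrow> n \<ge> k \<and> E \<noteq> {} \<and>
     (\<forall>e\<in>E. e \<subseteq> {1..n} \<and> card e = k)"

definition edges_at :: "nat set set \<Rightarrow> nat \<Rightarrow> nat set set" where
  "edges_at E i = {e\<in>E. i \<in> e}"

definition degree :: "nat set set \<Rightarrow> nat \<Rightarrow> nat" where
  "degree E i = card (edges_at E i)"

definition connected_in :: "nat set set \<Rightarrow> nat \<Rightarrow> nat \<Rightarrow> bool" where
  "connected_in E i j \<longleftrightarrow> i = j \<or>
     (\<exists>es. es \<noteq> [] \<and> set es \<subseteq> E \<and> i \<in> hd es \<and> j \<in> last es \<and>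
        (\<forall>r. Suc r < length es \<longrightarrow> es ! r \<inter> es ! Suc r \<noteq> {}))"

text \<open>Connected components: maximal nonempty sets of pairwise connected vertices
  (isolated vertices are singleton components).\<close>
definition connected_component :: "nat \<Rightarrow> nat set set \<Rightarrow> nat set \<Rightarrow> bool" where
  "connected_component n E C \<longleftrightarrow> C \<noteq> {} \<and> C \<subseteq> {1..n} \<and>
     (\<forall>i\<in>C. \<forall>j\<in>C. connected_in E i j) \<and>
     (\<forall>i\<in>C. \<forall>j\<in>{1..n}. connected_in E i j \<longrightarrow> j \<in> C)"

text \<open>Order-k tensors are functions on index lists (of length k).\<close>
type_synonym tensor = "nat list \<Rightarrow> complex"

definition adjacency_tensor :: "nat \<Rightarrow> nat set set \<Rightarrow> tensor" where
  "adjacency_tensor k E is =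
     (if length is = k \<and> set is \<in> E then 1 / of_nat (fact (k - 1)) else 0)"

definition degree_tensor :: "nat \<Rightarrow> nat set set \<Rightarrow> tensor" where
  "degree_tensor k E is =
     (if length is = k \<and> is \<noteq> [] \<and> (\<forall>j\<in>set is. j = hd is) then of_nat (degree E (hd is)) else 0)"

text \<open>sigma = -1: Laplacian D - A; sigma = 1: signless Laplacian D + A.\<close>
definition lap_tensor :: "complex \<Rightarrow> nat \<Rightarrow> nat set set \<Rightarrow> tensor" where
  "lap_tensor \<sigma> k E is = degree_tensor k E is + \<sigma> * adjacency_tensor k E is"

text \<open>(T(S) x(S)^{k-1})_i: the sub-tensor of T on S applied to x(S), at index i in S.
  Indices of the sub-tensor are identified with the elements of S.\<close>
definition tensor_apply :: "tensor \<Rightarrow> nat \<Rightarrow> nat set \<Rightarrow> (nat \<Rightarrow> complex) \<Rightarrow> nat \<Rightarrow> complex" where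
  "tensor_apply T k S x i =
     (\<Sum>is\<in>{is. length is = k - 1 \<and> set is \<subseteq> S}. T (i # is) * prod_list (map x is))"

definition sub_eigenpair :: "tensor \<Rightarrow> nat \<Rightarrow> nat set \<Rightarrow> complex \<Rightarrow> (nat \<Rightarrow> complex) \<Rightarrow> bool" where
  "sub_eigenpair T k S lam x \<longleftrightarrow> (\<exists>j\<in>S. x j \<noteq> 0) \<and>
     (\<forall>i\<in>S. tensor_apply T k S x i = lam * x i ^ (k - 1))"

end

theory Submission imports Defs "HOL-Combinatorics.Multiset_Permutations" begin

lemma tensor_formula:
  fixes \<sigma> :: complex
  assumes finS: "finite S" and finE: "finite E" and iS: "i \<in> S"
    and sub: "\<forall>e\<in>E. i\<in>e \<longrightarrow> e \<subseteq> S"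
    and cardk: "\<forall>e\<in>E. card e = k" and k: "k \<ge> 2"
  shows "tensor_apply (lap_tensor \<sigma> k E) k S x i =
     of_nat (degree E i) * x i ^ (k-1) + \<sigma> * (\<Sum>e\<in>edges_at E i. \<Prod>u\<in>e-{i}. x u)"
proof -
  define L where "L = {ys. length ys = k - 1 \<and> set ys \<subseteq> S}"
  have finL: "finite L" unfolding L_def
    using finite_lists_length_eq[OF finS, of "k-1"] by (simp add: conj_commute)
  define P where "P = (\<lambda>ys. prod_list (map x ys))"
  have split: "tensor_apply (lap_tensor \<sigma> k E) k S x i =
     (\<Sum>ys\<in>L. degree_tensor k E (i#ys) * P ys) + \<sigma> * (\<Sum>ys\<in>L. adjacency_tensor k E (i#ys) * P ys)"
    unfolding tensor_apply_def lap_tensor_def L_def P_def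
    by (simp add: ring_distribs sum.distrib sum_distrib_left mult.assoc)
  define r where "r = replicate (k-1) i"
  have rL: "r \<in> L" unfolding r_def L_def using iS by auto
  have D: "(\<Sum>ys\<in>L. degree_tensor k E (i#ys) * P ys) = of_nat (degree E i) * x i ^ (k-1)"
  proof -
    have "(\<Sum>ys\<in>L. degree_tensor k E (i#ys) * P ys) = (\<Sum>ys\<in>L. if ys = r then of_nat (degree E i) * P ys else 0)"
    proof (rule sum.cong[OF refl])
      fix ys assume "ys \<in> L"
      hence len: "length ys = k - 1" by (simp add: L_def)
      have "(\<forall>j\<in>set (i#ys). j = hd (i#ys)) \<longleftrightarrow> ys = r"
        unfolding r_def using len by (auto simp: replicate_length_same intro: replicate_eqI)
      thus "degree_tensor k E (i#ys) * P ys = (if ys = r then of_nat (degree E i) * P ys else 0)"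
        unfolding degree_tensor_def using len k by auto
    qed
    also have "\<dots> = of_nat (degree E i) * P r" using finL rL by (simp add: sum.delta')
    also have "P r = x i ^ (k-1)" by (simp add: P_def r_def prod_list_replicate)
    finally show ?thesis .
  qed
  define Ei where "Ei = edges_at E i"
  have finEi: "finite Ei" unfolding Ei_def edges_at_def using finE by simp
  define N where "N = (\<Union>e\<in>Ei. permutations_of_set (e - {i}))"
  define c where "c = (1 / of_nat (fact (k - 1)) :: complex)"
  have A1: "adjacency_tensor k E (i#ys) * P ys = (if ys \<in> N then c * P ys else 0)" if "ys \<in> L" for ys
  proof -
    from that have len: "length ys = k - 1" by (simp add: L_def)
    have "set (i#ys) \<in> E \<longleftrightarrow> ys \<in> N"
    proof
      assume h: "set (i#ys) \<in> E"
      hence "card (set (i#ys)) = length (i#ys)" using cardk len k by auto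
      hence d: "distinct (i#ys)" by (rule card_distinct)
      show "ys \<in> N" unfolding N_def Ei_def edges_at_def permutations_of_set_def
        using h d by (intro UN_I[of "set (i#ys)"]) auto
    next
      assume "ys \<in> N"
      then obtain e where e: "e \<in> E" "i \<in> e" "set ys = e - {i}"
        unfolding N_def Ei_def edges_at_def permutations_of_set_def by auto
      hence "set (i#ys) = e" by auto
      thus "set (i#ys) \<in> E" using e by simp
    qed
    thus ?thesis unfolding adjacency_tensor_def c_def using len k by auto
  qed
  have NL: "N \<subseteq> L"
  proof
    fix ys assume "ys \<in> N"
    then obtain e where e: "e \<in> E" "i \<in> e" "set ys = e - {i}" "distinct ys"
      unfolding N_def Ei_def edges_at_def permutations_of_set_def by auto
    have "length ys = card (e - {i})" using e distinct_card by metis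
    also have "\<dots> = k - 1" using e cardk finE
      by (metis card_Diff_singleton)
    finally show "ys \<in> L" unfolding L_def using e sub by auto
  qed
  have A: "(\<Sum>ys\<in>L. adjacency_tensor k E (i#ys) * P ys) = (\<Sum>e\<in>Ei. \<Prod>u\<in>e-{i}. x u)"
  proof -
    have "(\<Sum>ys\<in>L. adjacency_tensor k E (i#ys) * P ys) = (\<Sum>ys\<in>L. if ys \<in> N then c * P ys else 0)"
      using A1 by (rule sum.cong[OF refl])
    also have "\<dots> = (\<Sum>ys\<in>N. c * P ys)"
      using sum.inter_restrict[OF finL, of "\<lambda>ys. c * P ys" N] NL by (simp add: Int_absorb1)
    also have "\<dots> = (\<Sum>e\<in>Ei. \<Sum>ys\<in>permutations_of_set (e - {i}). c * P ys)"
      unfolding N_def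
    proof (rule sum.UNION_disjoint[OF finEi])
      show "\<forall>e\<in>Ei. finite (permutations_of_set (e - {i}))" by simp
      show "\<forall>e\<in>Ei. \<forall>e'\<in>Ei. e \<noteq> e' \<longrightarrow> permutations_of_set (e - {i}) \<inter> permutations_of_set (e' - {i}) = {}"
        unfolding Ei_def edges_at_def permutations_of_set_def by blast
    qed
    also have "\<dots> = (\<Sum>e\<in>Ei. \<Prod>u\<in>e-{i}. x u)"
    proof (rule sum.cong[OF refl])
      fix e assume e: "e \<in> Ei"
      have fe: "finite e" using e cardk k unfolding Ei_def edges_at_def
        by (metis (mono_tags, lifting) card.infinite mem_Collect_eq not_numeral_le_zero)
      have ce: "card (e - {i}) = k - 1" using e cardk unfolding Ei_def edges_at_def
        by (simp add: card_Diff_singleton)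
      have "(\<Sum>ys\<in>permutations_of_set (e - {i}). c * P ys) = (\<Sum>ys\<in>permutations_of_set (e - {i}). c * (\<Prod>u\<in>e-{i}. x u))"
        by (rule sum.cong[OF refl]) (auto simp: permutations_of_set_def P_def prod.distinct_set_conv_list[symmetric])
      also have "\<dots> = of_nat (fact (k-1)) * c * (\<Prod>u\<in>e-{i}. x u)"
        using fe ce by simp
      also have "\<dots> = (\<Prod>u\<in>e-{i}. x u)" by (simp add: c_def)
      finally show "(\<Sum>ys\<in>permutations_of_set (e - {i}). c * P ys) = (\<Prod>u\<in>e-{i}. x u)" .
    qed
    finally show ?thesis .
  qed
  show ?thesis using split D A by (simp add: Ei_def)
qed

lemma avg_eq:
  fixes z :: "'b \<Rightarrow> complex"
  assumes "finite A" "\<forall>e\<in>A. cmod (z e) \<le> cmod a" "sum z A = of_nat (card A) * a"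
  shows "\<forall>e\<in>A. z e = a"
proof
  fix e assume eA: "e \<in> A"
  define f where "f = (\<lambda>e. cmod a ^ 2 - Re (z e * cnj a))"
  have fnn: "\<forall>e\<in>A. f e \<ge> 0"
  proof
    fix e assume "e \<in> A"
    have "Re (z e * cnj a) \<le> cmod (z e * cnj a)" by (rule complex_Re_le_cmod)
    also have "\<dots> = cmod (z e) * cmod a" by (simp add: norm_mult)
    also have "\<dots> \<le> cmod a * cmod a" using assms(2) \<open>e\<in>A\<close> by (simp add: mult_right_mono)
    finally show "f e \<ge> 0" by (simp add: f_def power2_eq_square)
  qed
  have "sum f A = of_nat (card A) * cmod a ^ 2 - Re (sum z A * cnj a)"
    by (simp add: f_def sum_subtractf sum_distrib_right)
  also have "Re (sum z A * cnj a) = of_nat (card A) * cmod a ^ 2"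
    using assms(3) by (simp add: mult.assoc complex_mult_cnj cmod_def)
  finally have "sum f A = 0" by simp
  hence f0: "f e = 0" using sum_nonneg_eq_0_iff[OF assms(1)] fnn eA by blast
  have "cmod (z e - a) ^ 2 = cmod (z e) ^ 2 - 2 * Re (z e * cnj a) + cmod a ^ 2"
    unfolding cmod_power2 by (simp add: power2_eq_square algebra_simps)
  also have "\<dots> \<le> 0" using f0 assms(2) eA unfolding f_def
    by (smt (verit) norm_ge_zero power_mono)
  finally show "z e = a" by simp
qed

lemma prod_eq_max:
  fixes f :: "'b \<Rightarrow> real"
  assumes fin: "finite A" and b: "\<forall>u\<in>A. 0 \<le> f u \<and> f u \<le> m" and p: "prod f A = m ^ card A" and m: "m > 0"
  shows "\<forall>u\<in>A. f u = m"
proof (rule ccontr)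
  assume "\<not> ?thesis"
  then obtain u where u: "u \<in> A" "f u \<noteq> m" by blast
  hence lt: "f u < m" using b by force
  have "prod f A = f u * prod f (A - {u})" using fin u by (simp add: prod.remove)
  also have "prod f (A - {u}) \<le> m ^ card (A - {u})"
    using b prod_mono[of "A - {u}" f "\<lambda>_. m"] by simp
  hence "f u * prod f (A - {u}) \<le> f u * m ^ card (A - {u})" using b u by (simp add: mult_left_mono)
  also have "\<dots> < m * m ^ card (A - {u})" using lt m by simp
  also have "\<dots> = m ^ card A" using fin u
    by (metis card_Suc_Diff1 power_Suc)
  finally show False using p by simp
qed

theorem lemma4p1:
  fixes k n :: nat and E :: "nat set set" and x :: "nat \<Rightarrow> complex" and \<sigma> :: complex
  assumes "k \<ge> 3"
    and "uniform_hypergraph k n E"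
    and "\<sigma> = -1 \<or> \<sigma> = 1"
    and "sub_eigenpair (lap_tensor \<sigma> k E) k {1..n} 0 x"
    and "connected_component n E C"
    and "\<exists>j\<in>C. x j \<noteq> 0"
  shows "sub_eigenpair (lap_tensor \<sigma> k E) k C 0 x
     \<and> {j\<in>C. x j \<noteq> 0} = C
     \<and> (\<exists>\<gamma>::complex. \<gamma> \<noteq> 0 \<and> (\<exists>\<alpha>::nat \<Rightarrow> nat. \<forall>j\<in>C.
          x j = \<gamma> * exp (complex_of_real (2 * real (\<alpha> j) * pi / real k) * \<i>)))"
proof -
  have k2: "k \<ge> 2" and k1: "k \<ge> 1" using assms(1) by auto
  have Esub: "\<forall>e\<in>E. e \<subseteq> {1..n}" and cardk: "\<forall>e\<in>E. card e = k"
    using assms(2) unfolding uniform_hypergraph_def by auto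
  have finE: "finite E" by (rule finite_subset[of E "Pow {1..n}"]) (use Esub in auto)
  have fine: "finite e" if "e \<in> E" for e using Esub that rev_finite_subset[OF finite_atLeastAtMost] by blast
  have eig: "\<forall>i\<in>{1..n}. tensor_apply (lap_tensor \<sigma> k E) k {1..n} x i = 0"
    using assms(4) unfolding sub_eigenpair_def mult_zero_left by blast
  have Cne: "C \<noteq> {}" and Cn: "C \<subseteq> {1..n}"
    and Cclos: "\<forall>i\<in>C. \<forall>j\<in>{1..n}. connected_in E i j \<longrightarrow> j \<in> C"
    and Cconn: "\<forall>i\<in>C. \<forall>j\<in>C. connected_in E i j"
    using assms(5) unfolding connected_component_def by blast+
  have finC: "finite C" using Cn rev_finite_subset[OF finite_atLeastAtMost] by blast
  have edgeC: "e \<subseteq> C" if "i \<in> C" "e \<in> E" "i \<in> e" for i e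
  proof
    fix u assume "u \<in> e"
    have "connected_in E i u" unfolding connected_in_def
      using that \<open>u \<in> e\<close> by (intro disjI2 exI[of _ "[e]"]) auto
    moreover have "u \<in> {1..n}" using Esub that \<open>u\<in>e\<close> by blast
    ultimately show "u \<in> C" using Cclos that by blast
  qed
  define F where "F = (\<lambda>i. of_nat (degree E i) * x i ^ (k-1) + \<sigma> * (\<Sum>e\<in>edges_at E i. \<Prod>u\<in>e-{i}. x u))"
  have FC: "tensor_apply (lap_tensor \<sigma> k E) k C x i = F i" if "i \<in> C" for i
    unfolding F_def using that edgeC cardk k2 finC finE by (intro tensor_formula) auto
  have Fn: "tensor_apply (lap_tensor \<sigma> k E) k {1..n} x i = F i" if "i \<in> C" for i
    unfolding F_def by (rule tensor_formula) (use that Cn Esub cardk k2 finE finite_atLeastAtMost in blast)+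
  have eqn: "F i = 0" if "i \<in> C" for i using eig Fn[OF that] Cn that by auto
  have partA: "sub_eigenpair (lap_tensor \<sigma> k E) k C 0 x"
    unfolding sub_eigenpair_def using assms(6) FC eqn by auto
  have ss: "\<sigma> * \<sigma> = 1" and sn: "cmod \<sigma> = 1" using assms(3) by auto
  define m where "m = Max ((\<lambda>j. cmod (x j)) ` C)"
  have mge: "cmod (x j) \<le> m" if "j \<in> C" for j unfolding m_def using finC that by simp
  obtain i0 where i0: "i0 \<in> C" "cmod (x i0) = m"
  proof -
    have "m \<in> (\<lambda>j. cmod (x j)) ` C" unfolding m_def using finC Cne by simp
    thus ?thesis using that by blast
  qed
  have mpos: "m > 0"
  proof -
    obtain j where "j \<in> C" "x j \<noteq> 0" using assms(6) by blast
    hence "0 < cmod (x j)" "cmod (x j) \<le> m" using mge by auto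
    thus ?thesis by linarith
  qed
  have LL: "(\<Prod>u\<in>e-{v}. x u) = -\<sigma> * x v ^ (k-1) \<and> (\<forall>u\<in>e. cmod (x u) = m)"
    if v: "v \<in> C" "cmod (x v) = m" and e: "e \<in> E" "v \<in> e" for v e
  proof -
    define a where "a = -\<sigma> * x v ^ (k-1)"
    have na: "cmod a = m ^ (k-1)" unfolding a_def using sn v by (simp add: norm_mult norm_power)
    define Ev where "Ev = edges_at E v"
    have finEv: "finite Ev" unfolding Ev_def edges_at_def using finE by simp
    have "of_nat (card Ev) * x v ^ (k-1) + \<sigma> * (\<Sum>e\<in>Ev. \<Prod>u\<in>e-{v}. x u) = 0"
      using eqn[OF v(1)] unfolding F_def Ev_def degree_def .
    hence H: "\<sigma> * (\<Sum>e\<in>Ev. \<Prod>u\<in>e-{v}. x u) = - (of_nat (card Ev) * x v ^ (k-1))"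
      by (simp add: eq_neg_iff_add_eq_0 add.commute)
    have "(\<Sum>e\<in>Ev. \<Prod>u\<in>e-{v}. x u) = \<sigma> * (\<sigma> * (\<Sum>e\<in>Ev. \<Prod>u\<in>e-{v}. x u))"
      using ss by (simp add: mult.assoc[symmetric])
    also have "\<dots> = of_nat (card Ev) * a" unfolding H a_def by simp
    finally have sumeq: "(\<Sum>e\<in>Ev. \<Prod>u\<in>e-{v}. x u) = of_nat (card Ev) * a" .
    have bnd: "\<forall>e\<in>Ev. cmod (\<Prod>u\<in>e-{v}. x u) \<le> cmod a"
    proof
      fix e assume eE: "e \<in> Ev"
      hence ce: "card (e - {v}) = k - 1" "e \<in> E" "v \<in> e" using cardk unfolding Ev_def edges_at_def
        by (auto simp: card_Diff_singleton)
      have "cmod (\<Prod>u\<in>e-{v}. x u) = (\<Prod>u\<in>e-{v}. cmod (x u))" by (simp add: prod_norm)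
      also have "\<dots> \<le> (\<Prod>u\<in>e-{v}. m)" using edgeC[OF v(1) ce(2,3)] mge
        by (intro prod_mono) auto
      finally show "cmod (\<Prod>u\<in>e-{v}. x u) \<le> cmod a" using ce na by simp
    qed
    have eEv: "e \<in> Ev" unfolding Ev_def edges_at_def using e by simp
    have P: "(\<Prod>u\<in>e-{v}. x u) = a" using avg_eq[OF finEv bnd sumeq] eEv by blast
    have ce: "card (e - {v}) = k - 1" using cardk e by (simp add: card_Diff_singleton)
    have "(\<Prod>u\<in>e-{v}. cmod (x u)) = m ^ card (e - {v})"
      using P na ce by (metis prod_norm)
    hence "\<forall>u\<in>e-{v}. cmod (x u) = m"
      using prod_eq_max[of "e-{v}" "\<lambda>u. cmod (x u)" m] fine[OF e(1)] mge edgeC[OF v(1) e] mpos by auto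
    thus ?thesis using P v unfolding a_def by auto
  qed
  have pk: "y ^ k = y * y ^ (k-1)" for y :: complex using k1
    by (cases k) auto
  have step: "u \<in> C \<and> cmod (x u) = m \<and> x u ^ k = x v ^ k"
    if v: "v \<in> C" "cmod (x v) = m" and e: "e \<in> E" "v \<in> e" "u \<in> e" for u v e
  proof -
    have uC: "u \<in> C" using edgeC[OF v(1) e(1,2)] e(3) by auto
    have um: "cmod (x u) = m" using LL[OF v e(1,2)] e(3) by auto
    have "x u ^ k = x v ^ k"
    proof (cases "u = v")
      case False
      have "(\<Prod>w\<in>e. x w) = x v * (\<Prod>w\<in>e-{v}. x w)" by (rule prod.remove[OF fine[OF e(1)] e(2)])
      moreover have "(\<Prod>w\<in>e. x w) = x u * (\<Prod>w\<in>e-{u}. x w)" by (rule prod.remove[OF fine[OF e(1)] e(3)])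
      ultimately have "x v * (\<Prod>w\<in>e-{v}. x w) = x u * (\<Prod>w\<in>e-{u}. x w)" by simp
      moreover have "(\<Prod>w\<in>e-{v}. x w) = -\<sigma> * x v ^ (k-1)" using LL[OF v e(1,2)] by blast
      moreover have "(\<Prod>w\<in>e-{u}. x w) = -\<sigma> * x u ^ (k-1)" using LL[OF uC um e(1,3)] by blast
      ultimately have "x v * (-\<sigma> * x v ^ (k-1)) = x u * (-\<sigma> * x u ^ (k-1))" by metis
      hence "-\<sigma> * (x v * x v ^ (k-1)) = -\<sigma> * (x u * x u ^ (k-1))" by (metis mult.left_commute)
      hence "-\<sigma> * x v ^ k = -\<sigma> * x u ^ k" by (simp only: pk)
      moreover have "-\<sigma> \<noteq> 0" using assms(3) by auto
      ultimately show ?thesis by (metis mult_left_cancel)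
    qed simp
    thus ?thesis using uC um by simp
  qed
  define c where "c = x i0 ^ k"
  have good: "j \<in> C \<and> cmod (x j) = m \<and> x j ^ k = c" if j: "j \<in> C" for j
  proof (cases "i0 = j")
    case True thus ?thesis using i0 c_def by simp
  next
    case False
    have cij: "connected_in E i0 j" using Cconn i0(1) j by blast
    have "\<exists>es. es \<noteq> [] \<and> set es \<subseteq> E \<and> i0 \<in> hd es \<and> j \<in> last es \<and>
        (\<forall>r. Suc r < length es \<longrightarrow> es ! r \<inter> es ! Suc r \<noteq> {})"
      using cij False unfolding connected_in_def by blast
    then obtain es where es: "es \<noteq> []" "set es \<subseteq> E" "i0 \<in> hd es" "j \<in> last es"
        "\<forall>r. Suc r < length es \<longrightarrow> es ! r \<inter> es ! Suc r \<noteq> {}"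
      by blast
    have all: "\<forall>u\<in>es ! r. u \<in> C \<and> cmod (x u) = m \<and> x u ^ k = c" if "r < length es" for r
      using that
    proof (induction r)
      case 0
      have E0: "es ! 0 \<in> E" using es 0 by (meson nth_mem subsetD)
      have I0: "i0 \<in> es ! 0" using es by (simp add: hd_conv_nth)
      show ?case
      proof
        fix u assume "u \<in> es ! 0"
        from step[OF i0 E0 I0 this] show "u \<in> C \<and> cmod (x u) = m \<and> x u ^ k = c"
          unfolding c_def .
      qed
    next
      case (Suc r)
      have lt: "r < length es" "Suc r < length es" using Suc.prems by auto
      then obtain w where w: "w \<in> es ! r" "w \<in> es ! Suc r" using es(5) by blast
      have gw: "w \<in> C \<and> cmod (x w) = m \<and> x w ^ k = c" using Suc.IH[OF lt(1)] w(1) by blast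
      have ES: "es ! Suc r \<in> E" using es lt(2) by (meson nth_mem subsetD)
      show ?case
      proof
        fix u assume "u \<in> es ! Suc r"
        from step[OF conjunct1[OF gw] conjunct1[OF conjunct2[OF gw]] ES w(2) this] gw
        show "u \<in> C \<and> cmod (x u) = m \<and> x u ^ k = c" by simp
      qed
    qed
    have "last es = es ! (length es - 1)" using es by (simp add: last_conv_nth)
    moreover have "length es - 1 < length es" using es by simp
    ultimately show ?thesis using all[of "length es - 1"] es(4) by simp
  qed
  have partB: "{j\<in>C. x j \<noteq> 0} = C" using good mpos by force
  have g0: "x i0 \<noteq> 0" using i0 mpos by auto
  have kpos: "k > 0" using k1 by simp
  have ex: "\<exists>a::nat. x j = x i0 * exp (complex_of_real (2 * real a * pi / real k) * \<i>)" if "j \<in> C" for j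
  proof -
    have "(x j / x i0) ^ k = 1" using good[OF that] g0 c_def by (simp add: power_divide)
    then obtain a where "a < k" "cis (2 * pi * real a / real k) = x j / x i0"
    proof -
      have "x j / x i0 \<in> (\<lambda>a. cis (2 * pi * real a / real k)) ` {..<k}"
        using bij_betw_roots_unity[OF kpos] \<open>(x j / x i0) ^ k = 1\<close> unfolding bij_betw_def by simp
      thus ?thesis using that by force
    qed
    hence "x j = x i0 * cis (2 * pi * real a / real k)" using g0 by simp
    also have "cis (2 * pi * real a / real k) = exp (complex_of_real (2 * real a * pi / real k) * \<i>)"
      by (simp add: cis_conv_exp mult.commute mult.left_commute)
    finally show ?thesis by blast
  qed
  hence "\<exists>\<alpha>::nat \<Rightarrow> nat. \<forall>j\<in>C. x j = x i0 * exp (complex_of_real (2 * real (\<alpha> j) * pi / real k) * \<i>)"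
    by (intro bchoice) blast
  thus ?thesis using partA partB g0 by blast
qed

end
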